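(* Let $m,n\ge1$, $a\in(0,\infty)^m$, $b\in(0,\infty)^n$, and let $\Omega$ be a real $m\times n$ matrix. Then the function $F$ attains its maximum over $\mathcal A$ on the subset $\tilde{\mathcal A}$. Moreover, $\tilde{\mathcal A}$ is a convex, compact subset of a finite-dimensional Euclidean space, and $F$ is concave when restricted to $\tilde{\mathcal A}$.
   Context: $\mathcal A$ is the set of pairs $(A,B)$ of $(m+1)\times(n+1)$ real matrices (indices $i=0,\dots,m$, $j=0,\dots,n$) with: $A_{ij},B_{ij}\ge0$; $a_i=\sum_{j=0}^nA_{ij}$ for $i=1,\dots,m$; $A_{0j}=0$ for all $j$; $b_j=\sum_{i=0}^mB_{ij}$ for $j=1,\dots,n$; $B_{i0}=0$ for all $i$. $F:\mathcal A\to\mathbb{R}$, $F(A,B)=\sum_{i=1}^m\sum_{j=1}^n\sqrt{A_{ij}B_{ij}}\,\Omega_{ij}$. $\tilde{\mathcal A}\subset\mathcal A$ consists of those $(A,B)$ with: (1) $A_{ij}=B_{ij}=0$ whenever $i,j\ge1$ and $\Omega_{ij}\le0$; (2) for $j\ge1$, $B_{0j}=0$ if there is $i\ge1$ with $\Omega_{ij}>0$; (3) for $i\ge1$, $A_{i0}=0$ if there is $j\ge1$ with $\Omega_{ij}>0$. *)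

theory Defs
  imports "HOL-Analysis.Analysis"
begin

text \<open>Row index set {0..m} is modelled by the type 'm option (None = 0, Some i = i),
  column index set {0..n} by 'n option; m = CARD('m) >= 1, n = CARD('n) >= 1.\<close>

type_synonym ('m, 'n) mat0 = "real ^ 'n option ^ 'm option"

definition calA :: "real ^ 'm \<Rightarrow> real ^ 'n \<Rightarrow> (('m::finite, 'n::finite) mat0 \<times> ('m, 'n) mat0) set" where
  "calA a b = {(A, B).
     (\<forall>i j. A $ i $ j \<ge> 0 \<and> B $ i $ j \<ge> 0) \<and>
     (\<forall>i. (\<Sum>j\<in>UNIV. A $ Some i $ j) = a $ i) \<and>
     (\<forall>j. A $ None $ j = 0) \<and>
     (\<forall>j. (\<Sum>i\<in>UNIV. B $ i $ Some j) = b $ j) \<and>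
     (\<forall>i. B $ i $ None = 0)}"

definition Fobj :: "real ^ 'n ^ 'm \<Rightarrow> ('m::finite, 'n::finite) mat0 \<times> ('m, 'n) mat0 \<Rightarrow> real" where
  "Fobj \<Omega> AB = (\<Sum>i\<in>UNIV. \<Sum>j\<in>UNIV.
      sqrt (fst AB $ Some i $ Some j * snd AB $ Some i $ Some j) * \<Omega> $ i $ j)"

definition calA_tilde :: "real ^ 'n ^ 'm \<Rightarrow> real ^ 'm \<Rightarrow> real ^ 'n \<Rightarrow>
    (('m::finite, 'n::finite) mat0 \<times> ('m, 'n) mat0) set" where
  "calA_tilde \<Omega> a b = {(A, B) \<in> calA a b.
     (\<forall>i j. \<Omega> $ i $ j \<le> 0 \<longrightarrow> A $ Some i $ Some j = 0 \<and> B $ Some i $ Some j = 0) \<and>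
     (\<forall>j. (\<exists>i. \<Omega> $ i $ j > 0) \<longrightarrow> B $ None $ Some j = 0) \<and>
     (\<forall>i. (\<exists>j. \<Omega> $ i $ j > 0) \<longrightarrow> A $ Some i $ None = 0)}"

end

theory Submission
  imports Defs
begin

lemma sum_option_UNIV:
  fixes f :: "'a::finite option \<Rightarrow> real"
  shows "(\<Sum>j\<in>UNIV. f j) = f None + (\<Sum>j\<in>UNIV. f (Some j))"
proof -
  have U: "(UNIV :: 'a option set) = insert None (range Some)"
    by (auto intro: option.exhaust)
  have "(\<Sum>j\<in>UNIV. f j) = f None + sum f (range Some)"
    unfolding U by (subst sum.insert) auto
  also have "sum f (range Some) = (\<Sum>j\<in>UNIV. f (Some j))"
    by (subst sum.reindex) (auto simp: inj_on_def)
  finally show ?thesis .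
qed

lemma sqrt_concave:
  fixes x1 y1 x2 y2 u v :: real
  assumes "x1 \<ge> 0" "y1 \<ge> 0" "x2 \<ge> 0" "y2 \<ge> 0" "u \<ge> 0" "v \<ge> 0" "u + v = 1"
  shows "u * sqrt (x1 * y1) + v * sqrt (x2 * y2) \<le> sqrt ((u * x1 + v * x2) * (u * y1 + v * y2))"
proof (rule real_le_rsqrt)
  have e: "sqrt (x1 * y1) * sqrt (x2 * y2) = sqrt (x1 * y2) * sqrt (x2 * y1)"
    by (simp add: real_sqrt_mult[symmetric] ac_simps)
  have "2 * (sqrt (x1 * y2) * sqrt (x2 * y1)) \<le> (sqrt (x1 * y2))^2 + (sqrt (x2 * y1))^2"
    using sum_squares_bound[of "sqrt (x1 * y2)" "sqrt (x2 * y1)"] by simp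
  also have "\<dots> = x1 * y2 + x2 * y1" using assms by simp
  finally have k: "2 * (sqrt (x1 * y1) * sqrt (x2 * y2)) \<le> x1 * y2 + x2 * y1" using e by simp
  have uv: "u * v \<ge> 0" using assms by simp
  have "(u * sqrt (x1 * y1) + v * sqrt (x2 * y2))^2
     = u^2 * (x1 * y1) + v^2 * (x2 * y2) + u * v * (2 * (sqrt (x1 * y1) * sqrt (x2 * y2)))"
    using assms by (simp add: power2_eq_square algebra_simps real_sqrt_mult[symmetric])
  also have "\<dots> \<le> u^2 * (x1 * y1) + v^2 * (x2 * y2) + u * v * (x1 * y2 + x2 * y1)"
    using mult_left_mono[OF k uv] by simp
  also have "\<dots> = (u * x1 + v * x2) * (u * y1 + v * y2)"
    by (simp add: power2_eq_square algebra_simps)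
  finally show "(u * sqrt (x1 * y1) + v * sqrt (x2 * y2))\<^sup>2 \<le> (u * x1 + v * x2) * (u * y1 + v * y2)" .
qed

definition rA :: "real ^ 'n ^ 'm \<Rightarrow> real ^ 'm \<Rightarrow> ('m::finite, 'n::finite) mat0 \<Rightarrow> 'm \<Rightarrow> real" where
  "rA \<Omega> a A i = a $ i - (\<Sum>j\<in>UNIV. if \<Omega> $ i $ j > 0 then A $ Some i $ Some j else 0)"

definition TA :: "real ^ 'n ^ 'm \<Rightarrow> real ^ 'm \<Rightarrow> ('m::finite, 'n::finite) mat0 \<Rightarrow> ('m, 'n) mat0" where
  "TA \<Omega> a A = (\<chi> x y. case x of None \<Rightarrow> 0 | Some i \<Rightarrow> (case y of
      None \<Rightarrow> (if \<exists>j. \<Omega> $ i $ j > 0 then 0 else rA \<Omega> a A i)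
    | Some j \<Rightarrow> (if \<Omega> $ i $ j > 0 then A $ Some i $ Some j +
         (if j = (SOME j. \<Omega> $ i $ j > 0) then rA \<Omega> a A i else 0) else 0)))"

lemma TA_props:
  fixes A :: "('m::finite, 'n::finite) mat0"
  assumes nn: "\<forall>x y. A $ x $ y \<ge> 0" and rs: "\<forall>i. (\<Sum>y\<in>UNIV. A $ Some i $ y) = a $ i"
  shows "\<forall>x y. TA \<Omega> a A $ x $ y \<ge> 0"
    and "\<forall>i. (\<Sum>y\<in>UNIV. TA \<Omega> a A $ Some i $ y) = a $ i"
    and "\<forall>y. TA \<Omega> a A $ None $ y = 0"
    and "\<forall>i j. \<Omega> $ i $ j \<le> 0 \<longrightarrow> TA \<Omega> a A $ Some i $ Some j = 0"
    and "\<forall>i. (\<exists>j. \<Omega> $ i $ j > 0) \<longrightarrow> TA \<Omega> a A $ Some i $ None = 0"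
    and "\<forall>i j. \<Omega> $ i $ j > 0 \<longrightarrow> TA \<Omega> a A $ Some i $ Some j \<ge> A $ Some i $ Some j"
proof -
  have r: "rA \<Omega> a A i \<ge> 0" for i
  proof -
    have "(\<Sum>j\<in>UNIV. if \<Omega> $ i $ j > 0 then A $ Some i $ Some j else 0) \<le> (\<Sum>j\<in>UNIV. A $ Some i $ Some j)"
      by (rule sum_mono) (use nn in auto)
    also have "\<dots> \<le> a $ i" using rs sum_option_UNIV[of "\<lambda>y. A $ Some i $ y"] nn by force
    finally show ?thesis unfolding rA_def by simp
  qed
  show "\<forall>x y. TA \<Omega> a A $ x $ y \<ge> 0"
    using r nn by (auto simp: TA_def split: option.splits)
  show "\<forall>y. TA \<Omega> a A $ None $ y = 0" by (simp add: TA_def)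
  show "\<forall>i j. \<Omega> $ i $ j \<le> 0 \<longrightarrow> TA \<Omega> a A $ Some i $ Some j = 0" by (simp add: TA_def)
  show "\<forall>i. (\<exists>j. \<Omega> $ i $ j > 0) \<longrightarrow> TA \<Omega> a A $ Some i $ None = 0" by (simp add: TA_def)
  show "\<forall>i j. \<Omega> $ i $ j > 0 \<longrightarrow> TA \<Omega> a A $ Some i $ Some j \<ge> A $ Some i $ Some j"
    using r by (simp add: TA_def)
  show "\<forall>i. (\<Sum>y\<in>UNIV. TA \<Omega> a A $ Some i $ y) = a $ i"
  proof
    fix i
    define S where "S = (\<Sum>j\<in>UNIV. if \<Omega> $ i $ j > 0 then A $ Some i $ Some j else 0)"
    have rr: "rA \<Omega> a A i = a $ i - S" unfolding rA_def S_def by simp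
    show "(\<Sum>y\<in>UNIV. TA \<Omega> a A $ Some i $ y) = a $ i"
    proof (cases "\<exists>j. \<Omega> $ i $ j > 0")
      case True
      define j0 where "j0 = (SOME j. \<Omega> $ i $ j > 0)"
      have j0: "\<Omega> $ i $ j0 > 0" unfolding j0_def using True by (rule someI_ex)
      have "(\<Sum>j\<in>UNIV. TA \<Omega> a A $ Some i $ Some j)
          = (\<Sum>j\<in>UNIV. (if \<Omega> $ i $ j > 0 then A $ Some i $ Some j else 0) + (if j = j0 then rA \<Omega> a A i else 0))"
        by (rule sum.cong) (use j0 in \<open>auto simp: TA_def j0_def[symmetric]\<close>)
      also have "\<dots> = S + rA \<Omega> a A i" by (simp add: sum.distrib S_def)
      finally have c: "(\<Sum>j\<in>UNIV. TA \<Omega> a A $ Some i $ Some j) = S + rA \<Omega> a A i" .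
      have n: "TA \<Omega> a A $ Some i $ None = 0" using True by (simp add: TA_def)
      show ?thesis unfolding sum_option_UNIV[of "\<lambda>y. TA \<Omega> a A $ Some i $ y"] c n rr by simp
    next
      case False
      have "S = 0" unfolding S_def using False by (intro sum.neutral) (meson not_less)
      have c: "(\<Sum>j\<in>UNIV. TA \<Omega> a A $ Some i $ Some j) = 0"
        using False by (intro sum.neutral) (auto simp: TA_def)
      have n: "TA \<Omega> a A $ Some i $ None = rA \<Omega> a A i" using False by (simp add: TA_def)
      show ?thesis unfolding sum_option_UNIV[of "\<lambda>y. TA \<Omega> a A $ Some i $ y"] c n rr \<open>S = 0\<close> by simp
    qed
  qed
qed

definition rB :: "real ^ 'n ^ 'm \<Rightarrow> real ^ 'n \<Rightarrow> ('m::finite, 'n::finite) mat0 \<Rightarrow> 'n \<Rightarrow> real" where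
  "rB \<Omega> b B j = b $ j - (\<Sum>i\<in>UNIV. if \<Omega> $ i $ j > 0 then B $ Some i $ Some j else 0)"

definition TB :: "real ^ 'n ^ 'm \<Rightarrow> real ^ 'n \<Rightarrow> ('m::finite, 'n::finite) mat0 \<Rightarrow> ('m, 'n) mat0" where
  "TB \<Omega> b B = (\<chi> x y. case y of None \<Rightarrow> 0 | Some j \<Rightarrow> (case x of
      None \<Rightarrow> (if \<exists>i. \<Omega> $ i $ j > 0 then 0 else rB \<Omega> b B j)
    | Some i \<Rightarrow> (if \<Omega> $ i $ j > 0 then B $ Some i $ Some j +
         (if i = (SOME i. \<Omega> $ i $ j > 0) then rB \<Omega> b B j else 0) else 0)))"

lemma TB_props:
  fixes B :: "('m::finite, 'n::finite) mat0"
  assumes nn: "\<forall>x y. B $ x $ y \<ge> 0" and rs: "\<forall>j. (\<Sum>x\<in>UNIV. B $ x $ Some j) = b $ j"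
  shows "\<forall>x y. TB \<Omega> b B $ x $ y \<ge> 0"
    and "\<forall>j. (\<Sum>x\<in>UNIV. TB \<Omega> b B $ x $ Some j) = b $ j"
    and "\<forall>x. TB \<Omega> b B $ x $ None = 0"
    and "\<forall>i j. \<Omega> $ i $ j \<le> 0 \<longrightarrow> TB \<Omega> b B $ Some i $ Some j = 0"
    and "\<forall>j. (\<exists>i. \<Omega> $ i $ j > 0) \<longrightarrow> TB \<Omega> b B $ None $ Some j = 0"
    and "\<forall>i j. \<Omega> $ i $ j > 0 \<longrightarrow> TB \<Omega> b B $ Some i $ Some j \<ge> B $ Some i $ Some j"
proof -
  have r: "rB \<Omega> b B j \<ge> 0" for j
  proof -
    have "(\<Sum>i\<in>UNIV. if \<Omega> $ i $ j > 0 then B $ Some i $ Some j else 0) \<le> (\<Sum>i\<in>UNIV. B $ Some i $ Some j)"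
      by (rule sum_mono) (use nn in auto)
    also have "\<dots> \<le> b $ j" using rs sum_option_UNIV[of "\<lambda>x. B $ x $ Some j"] nn by force
    finally show ?thesis unfolding rB_def by simp
  qed
  show "\<forall>x y. TB \<Omega> b B $ x $ y \<ge> 0"
    using r nn by (auto simp: TB_def split: option.splits)
  show "\<forall>x. TB \<Omega> b B $ x $ None = 0" by (simp add: TB_def)
  show "\<forall>i j. \<Omega> $ i $ j \<le> 0 \<longrightarrow> TB \<Omega> b B $ Some i $ Some j = 0" by (simp add: TB_def)
  show "\<forall>j. (\<exists>i. \<Omega> $ i $ j > 0) \<longrightarrow> TB \<Omega> b B $ None $ Some j = 0" by (simp add: TB_def)
  show "\<forall>i j. \<Omega> $ i $ j > 0 \<longrightarrow> TB \<Omega> b B $ Some i $ Some j \<ge> B $ Some i $ Some j"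
    using r by (simp add: TB_def)
  show "\<forall>j. (\<Sum>x\<in>UNIV. TB \<Omega> b B $ x $ Some j) = b $ j"
  proof
    fix j
    define S where "S = (\<Sum>i\<in>UNIV. if \<Omega> $ i $ j > 0 then B $ Some i $ Some j else 0)"
    have rr: "rB \<Omega> b B j = b $ j - S" unfolding rB_def S_def by simp
    show "(\<Sum>x\<in>UNIV. TB \<Omega> b B $ x $ Some j) = b $ j"
    proof (cases "\<exists>i. \<Omega> $ i $ j > 0")
      case True
      define i0 where "i0 = (SOME i. \<Omega> $ i $ j > 0)"
      have i0: "\<Omega> $ i0 $ j > 0" unfolding i0_def using True by (rule someI_ex)
      have "(\<Sum>i\<in>UNIV. TB \<Omega> b B $ Some i $ Some j)
          = (\<Sum>i\<in>UNIV. (if \<Omega> $ i $ j > 0 then B $ Some i $ Some j else 0) + (if i = i0 then rB \<Omega> b B j else 0))"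
        by (rule sum.cong) (use i0 in \<open>auto simp: TB_def i0_def[symmetric]\<close>)
      also have "\<dots> = S + rB \<Omega> b B j" by (simp add: sum.distrib S_def)
      finally have c: "(\<Sum>i\<in>UNIV. TB \<Omega> b B $ Some i $ Some j) = S + rB \<Omega> b B j" .
      have n: "TB \<Omega> b B $ None $ Some j = 0" using True by (simp add: TB_def)
      show ?thesis unfolding sum_option_UNIV[of "\<lambda>x. TB \<Omega> b B $ x $ Some j"] c n rr by simp
    next
      case False
      have "S = 0" unfolding S_def using False by (intro sum.neutral) (meson not_less)
      have c: "(\<Sum>i\<in>UNIV. TB \<Omega> b B $ Some i $ Some j) = 0"
        using False by (intro sum.neutral) (auto simp: TB_def)
      have n: "TB \<Omega> b B $ None $ Some j = rB \<Omega> b B j" using False by (simp add: TB_def)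
      show ?thesis unfolding sum_option_UNIV[of "\<lambda>x. TB \<Omega> b B $ x $ Some j"] c n rr \<open>S = 0\<close> by simp
    qed
  qed
qed

lemma T_mem:
  assumes "(A, B) \<in> calA a b"
  shows "(TA \<Omega> a A, TB \<Omega> b B) \<in> calA_tilde \<Omega> a b"
    and "Fobj \<Omega> (A, B) \<le> Fobj \<Omega> (TA \<Omega> a A, TB \<Omega> b B)"
proof -
  have nA: "\<forall>x y. A $ x $ y \<ge> 0" and rA: "\<forall>i. (\<Sum>y\<in>UNIV. A $ Some i $ y) = a $ i"
   and nB: "\<forall>x y. B $ x $ y \<ge> 0" and rB: "\<forall>j. (\<Sum>x\<in>UNIV. B $ x $ Some j) = b $ j"
    using assms by (auto simp: calA_def)
  note PA = TA_props[OF nA rA, of \<Omega>] and PB = TB_props[OF nB rB, of \<Omega>]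
  show "(TA \<Omega> a A, TB \<Omega> b B) \<in> calA_tilde \<Omega> a b"
    using PA PB by (auto simp: calA_tilde_def calA_def)
  show "Fobj \<Omega> (A, B) \<le> Fobj \<Omega> (TA \<Omega> a A, TB \<Omega> b B)"
    unfolding Fobj_def fst_conv snd_conv
  proof (intro sum_mono)
    fix i j
    show "sqrt (A $ Some i $ Some j * B $ Some i $ Some j) * \<Omega> $ i $ j
       \<le> sqrt (TA \<Omega> a A $ Some i $ Some j * TB \<Omega> b B $ Some i $ Some j) * \<Omega> $ i $ j"
    proof (cases "\<Omega> $ i $ j > 0")
      case True
      have "sqrt (A $ Some i $ Some j * B $ Some i $ Some j)
         \<le> sqrt (TA \<Omega> a A $ Some i $ Some j * TB \<Omega> b B $ Some i $ Some j)"
        using PA(1,6) PB(6) True nA nB by (intro real_sqrt_le_mono mult_mono) auto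
      then show ?thesis using True by (simp add: mult_right_mono)
    next
      case False
      then have "TA \<Omega> a A $ Some i $ Some j = 0" using PA(4) by simp
      moreover have "sqrt (A $ Some i $ Some j * B $ Some i $ Some j) * \<Omega> $ i $ j \<le> 0"
        using False nA nB by (intro mult_nonneg_nonpos) auto
      ultimately show ?thesis by simp
    qed
  qed
qed

lemma calA_tilde_convex:
  fixes \<Omega> :: "real ^ 'n::finite ^ 'm::finite"
  shows "convex (calA_tilde \<Omega> a b)"
proof (unfold convex_def, intro ballI allI impI)
  fix p q :: "('m::finite, 'n::finite) mat0 \<times> ('m, 'n) mat0" and u v :: real
  assume p: "p \<in> calA_tilde \<Omega> a b" and q: "q \<in> calA_tilde \<Omega> a b" and uv: "0 \<le> u" "0 \<le> v" "u + v = 1"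
  obtain A B where pAB: "p = (A, B)" by (cases p)
  obtain A' B' where qAB: "q = (A', B')" by (cases q)
  have e1: "(\<Sum>j\<in>UNIV. u * A $ Some i $ j + v * A' $ Some i $ j) = a $ i" for i
    using p q uv unfolding pAB qAB
    apply (simp add: calA_tilde_def calA_def sum.distrib sum_distrib_left[symmetric])
    by (metis distrib_right mult_1)
  have e2: "(\<Sum>i\<in>UNIV. u * B $ i $ Some j + v * B' $ i $ Some j) = b $ j" for j
    using p q uv unfolding pAB qAB
    apply (simp add: calA_tilde_def calA_def sum.distrib sum_distrib_left[symmetric])
    by (metis distrib_right mult_1)
  show "u *\<^sub>R p + v *\<^sub>R q \<in> calA_tilde \<Omega> a b"
    using p q uv e1 e2 unfolding pAB qAB
    by (auto simp: calA_tilde_def calA_def)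
qed

lemma calA_tilde_closed: "closed (calA_tilde \<Omega> a b)"
proof -
  have "calA_tilde \<Omega> a b = {p. (\<forall>i j. 0 \<le> fst p $ i $ j) \<and> (\<forall>i j. 0 \<le> snd p $ i $ j) \<and>
     (\<forall>i. (\<Sum>j\<in>UNIV. fst p $ Some i $ j) = a $ i) \<and>
     (\<forall>j. fst p $ None $ j = 0) \<and>
     (\<forall>j. (\<Sum>i\<in>UNIV. snd p $ i $ Some j) = b $ j) \<and>
     (\<forall>i. snd p $ i $ None = 0) \<and>
     (\<forall>i j. \<Omega> $ i $ j \<le> 0 \<longrightarrow> fst p $ Some i $ Some j = 0 \<and> snd p $ Some i $ Some j = 0) \<and>
     (\<forall>j. (\<exists>i. \<Omega> $ i $ j > 0) \<longrightarrow> snd p $ None $ Some j = 0) \<and>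
     (\<forall>i. (\<exists>j. \<Omega> $ i $ j > 0) \<longrightarrow> fst p $ Some i $ None = 0)}"
    by (auto simp: calA_tilde_def calA_def)
  also have "closed \<dots>"
    by (intro closed_Collect_conj closed_Collect_all closed_Collect_le closed_Collect_eq
        closed_Collect_imp open_Collect_const continuous_intros)
  finally show ?thesis .
qed

lemma norm_mat_le:
  fixes M :: "real ^ 'b::finite ^ 'a::finite"
  shows "norm M \<le> (\<Sum>x\<in>UNIV. \<Sum>y\<in>UNIV. \<bar>M $ x $ y\<bar>)"
proof -
  have "norm M \<le> (\<Sum>x\<in>UNIV. norm (M $ x))"
    unfolding norm_vec_def by (rule L2_set_le_sum) simp
  also have "\<dots> \<le> (\<Sum>x\<in>UNIV. \<Sum>y\<in>UNIV. \<bar>M $ x $ y\<bar>)"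
    by (intro sum_mono norm_le_l1_cart)
  finally show ?thesis .
qed

lemma calA_bounded:
  fixes a :: "real ^ 'm::finite" and b :: "real ^ 'n::finite"
  shows "bounded (calA a b)"
proof -
  define KA where "KA = (\<Sum>k\<in>UNIV. \<bar>a $ k\<bar>)"
  define KB where "KB = (\<Sum>k\<in>UNIV. \<bar>b $ k\<bar>)"
  have bA: "\<bar>A $ x $ y\<bar> \<le> KA" and bB: "\<bar>B $ x $ y\<bar> \<le> KB" if "(A, B) \<in> calA a b" for A B x y
  proof -
    have nA: "\<forall>x y. A $ x $ y \<ge> 0" and rA: "\<forall>i. (\<Sum>y\<in>UNIV. A $ Some i $ y) = a $ i"
     and nB: "\<forall>x y. B $ x $ y \<ge> 0" and rB: "\<forall>j. (\<Sum>x\<in>UNIV. B $ x $ Some j) = b $ j"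
     and zA: "\<forall>j. A $ None $ j = 0" and zB: "\<forall>i. B $ i $ None = 0"
      using that by (auto simp: calA_def)
    have KA0: "KA \<ge> 0" unfolding KA_def by (simp add: sum_nonneg)
    have KB0: "KB \<ge> 0" unfolding KB_def by (simp add: sum_nonneg)
    show "\<bar>A $ x $ y\<bar> \<le> KA"
    proof (cases x)
      case None then show ?thesis using zA KA0 by simp
    next
      case (Some i)
      have "A $ Some i $ y \<le> (\<Sum>y\<in>UNIV. A $ Some i $ y)"
        using nA by (intro member_le_sum) auto
      also have "\<dots> = a $ i" using rA by simp
      also have "\<dots> \<le> \<bar>a $ i\<bar>" by simp
      also have "\<dots> \<le> KA" unfolding KA_def by (intro member_le_sum) auto
      finally show ?thesis using Some nA by simp
    qed
    show "\<bar>B $ x $ y\<bar> \<le> KB"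
    proof (cases y)
      case None then show ?thesis using zB KB0 by simp
    next
      case (Some j)
      have "B $ x $ Some j \<le> (\<Sum>x\<in>UNIV. B $ x $ Some j)"
        using nB by (intro member_le_sum) auto
      also have "\<dots> = b $ j" using rB by simp
      also have "\<dots> \<le> \<bar>b $ j\<bar>" by simp
      also have "\<dots> \<le> KB" unfolding KB_def by (intro member_le_sum) auto
      finally show ?thesis using Some nB by simp
    qed
  qed
  show ?thesis unfolding bounded_iff
  proof (intro exI ballI)
    fix p assume p: "p \<in> calA a b"
    obtain A B where pAB: "p = (A, B)" by (cases p)
    have "norm p \<le> norm A + norm B" unfolding pAB by (rule norm_Pair_le)
    also have "\<dots> \<le> (\<Sum>x\<in>UNIV. \<Sum>y\<in>UNIV. \<bar>A $ x $ y\<bar>) + (\<Sum>x\<in>UNIV. \<Sum>y\<in>UNIV. \<bar>B $ x $ y\<bar>)"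
      by (intro add_mono norm_mat_le)
    also have "(\<Sum>x\<in>UNIV. \<Sum>y\<in>UNIV. \<bar>A $ x $ y\<bar>) \<le> (\<Sum>x\<in>(UNIV::'m option set). \<Sum>y\<in>(UNIV::'n option set). KA)"
      using p bA unfolding pAB by (intro sum_mono) auto
    also have "(\<Sum>x\<in>UNIV. \<Sum>y\<in>UNIV. \<bar>B $ x $ y\<bar>) \<le> (\<Sum>x\<in>(UNIV::'m option set). \<Sum>y\<in>(UNIV::'n option set). KB)"
      using p bB unfolding pAB by (intro sum_mono) auto
    finally show "norm p \<le> (\<Sum>x\<in>(UNIV::'m option set). \<Sum>y\<in>(UNIV::'n option set). KA) + (\<Sum>x\<in>(UNIV::'m option set). \<Sum>y\<in>(UNIV::'n option set). KB)"
      by simp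
  qed
qed

lemma Fobj_cont: "continuous_on S (Fobj \<Omega>)"
  unfolding Fobj_def by (intro continuous_intros)

lemma Fobj_concave:
  fixes \<Omega> :: "real ^ 'n::finite ^ 'm::finite"
  shows "concave_on (calA_tilde \<Omega> a b) (Fobj \<Omega>)"
  unfolding concave_on_iff
proof (intro conjI calA_tilde_convex ballI allI impI)
  fix p q :: "('m, 'n) mat0 \<times> ('m, 'n) mat0" and u v :: real
  assume p: "p \<in> calA_tilde \<Omega> a b" and q: "q \<in> calA_tilde \<Omega> a b" and uv: "0 \<le> u" "0 \<le> v" "u + v = 1"
  obtain A B where pAB: "p = (A, B)" by (cases p)
  obtain A' B' where qAB: "q = (A', B')" by (cases q)
  have nn: "\<forall>x y. 0 \<le> A $ x $ y \<and> 0 \<le> B $ x $ y \<and> 0 \<le> A' $ x $ y \<and> 0 \<le> B' $ x $ y"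
    using p q unfolding pAB qAB by (auto simp: calA_tilde_def calA_def)
  have z: "\<forall>i j. \<Omega> $ i $ j \<le> 0 \<longrightarrow> A $ Some i $ Some j = 0 \<and> A' $ Some i $ Some j = 0"
    using p q unfolding pAB qAB by (auto simp: calA_tilde_def calA_def)
  have "u * Fobj \<Omega> p + v * Fobj \<Omega> q = (\<Sum>i\<in>UNIV. \<Sum>j\<in>UNIV.
      (u * sqrt (A $ Some i $ Some j * B $ Some i $ Some j) + v * sqrt (A' $ Some i $ Some j * B' $ Some i $ Some j)) * \<Omega> $ i $ j)"
    unfolding pAB qAB Fobj_def by (simp add: sum_distrib_left sum.distrib algebra_simps)
  also have "\<dots> \<le> Fobj \<Omega> (u *\<^sub>R p + v *\<^sub>R q)"
    unfolding pAB qAB Fobj_def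
  proof (simp, intro sum_mono)
    fix i j
    show "(u * sqrt (A $ Some i $ Some j * B $ Some i $ Some j) + v * sqrt (A' $ Some i $ Some j * B' $ Some i $ Some j)) * \<Omega> $ i $ j
      \<le> sqrt ((u * A $ Some i $ Some j + v * A' $ Some i $ Some j) * (u * B $ Some i $ Some j + v * B' $ Some i $ Some j)) * \<Omega> $ i $ j"
    proof (cases "\<Omega> $ i $ j > 0")
      case True
      then show ?thesis using nn uv
        by (intro mult_right_mono sqrt_concave) auto
    next
      case False
      then show ?thesis using z by simp
    qed
  qed
  finally show "u * Fobj \<Omega> p + v * Fobj \<Omega> q \<le> Fobj \<Omega> (u *\<^sub>R p + v *\<^sub>R q)" .
qed

lemma calA_nonempty:
  fixes a :: "real ^ 'm::finite" and b :: "real ^ 'n::finite"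
  assumes "\<forall>i. a $ i > 0" and "\<forall>j. b $ j > 0"
  shows "calA a b \<noteq> {}"
proof -
  define A0 :: "('m, 'n) mat0" where "A0 = (\<chi> x y. case x of None \<Rightarrow> 0 | Some i \<Rightarrow> (case y of None \<Rightarrow> a $ i | Some j \<Rightarrow> 0))"
  define B0 :: "('m, 'n) mat0" where "B0 = (\<chi> x y. case y of None \<Rightarrow> 0 | Some j \<Rightarrow> (case x of None \<Rightarrow> b $ j | Some i \<Rightarrow> 0))"
  have "(A0, B0) \<in> calA a b"
    using assms unfolding calA_def
    by (auto simp: A0_def B0_def sum_option_UNIV less_imp_le split: option.splits)
  then show ?thesis by blast
qed

theorem lemma2p14:
  fixes a :: "real ^ 'm::finite" and b :: "real ^ 'n::finite" and \<Omega> :: "real ^ 'n ^ 'm"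
  assumes "\<forall>i. a $ i > 0" and "\<forall>j. b $ j > 0"
  shows "(\<exists>p\<in>calA_tilde \<Omega> a b. \<forall>q\<in>calA a b. Fobj \<Omega> q \<le> Fobj \<Omega> p)
    \<and> convex (calA_tilde \<Omega> a b) \<and> compact (calA_tilde \<Omega> a b)
    \<and> concave_on (calA_tilde \<Omega> a b) (Fobj \<Omega>)"
proof -
  have sub: "calA_tilde \<Omega> a b \<subseteq> calA a b" by (auto simp: calA_tilde_def)
  have cpt: "compact (calA_tilde \<Omega> a b)"
    unfolding compact_eq_bounded_closed
    using calA_tilde_closed bounded_subset[OF calA_bounded sub] by blast
  obtain q0 where q0: "q0 \<in> calA a b" using calA_nonempty[OF assms] by blast
  obtain A0 B0 where "q0 = (A0, B0)" by (cases q0)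
  then have ne: "calA_tilde \<Omega> a b \<noteq> {}" using T_mem(1)[of A0 B0 a b \<Omega>] q0 by blast
  obtain p where p: "p \<in> calA_tilde \<Omega> a b" and pmax: "\<forall>y\<in>calA_tilde \<Omega> a b. Fobj \<Omega> y \<le> Fobj \<Omega> p"
    using continuous_attains_sup[OF cpt ne Fobj_cont] by blast
  have "\<forall>q\<in>calA a b. Fobj \<Omega> q \<le> Fobj \<Omega> p"
  proof
    fix q assume q: "q \<in> calA a b"
    obtain A B where qAB: "q = (A, B)" by (cases q)
    have "Fobj \<Omega> q \<le> Fobj \<Omega> (TA \<Omega> a A, TB \<Omega> b B)" using T_mem(2) q qAB by blast
    also have "\<dots> \<le> Fobj \<Omega> p" using pmax T_mem(1) q qAB by blast
    finally show "Fobj \<Omega> q \<le> Fobj \<Omega> p" .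
  qed
  then show ?thesis using p cpt calA_tilde_convex Fobj_concave by blast
qed

end
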